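(* Let $p_s\in(0,1)$, $p_f=1-p_s$, let $K\ge1$ be an integer and let $p_0,p\in[0,1]$ with $p_0+Kp=1$. Let $(h(t))_{t\in\mathbb{N}}$ be i.i.d. with $\mathbb{P}[h(t)=1]=p_s$, $\mathbb{P}[h(t)=0]=p_f$, and let $(\delta(t))_{t\in\mathbb{N}}$ be i.i.d., independent of $(h(t))$, with $\mathbb{P}[\delta(t)=0]=p_0$ and $\mathbb{P}[\delta(t)=k]=p$ for $1\le k\le K$. Define the positive-integer-valued process $\Delta(t)$ by $$\Delta(t)=\begin{cases}\delta(t)+1, & h(t)=1,\\ \max\{1,\ \Delta(t-1)+\delta(t)-\delta(t-1)+1\}, & h(t)=0.\end{cases}$$ Then the stationary distribution $\pi_{k,i}=\lim_{t\to\infty}\mathbb{P}[\delta(t)=k,\Delta(t)=i]$, $k\in\{0,1,\dots,K\}$, $i\ge1$, of the Markov chain $(\delta(t),\Delta(t))$ is given by $$\pi_{k,i}=\begin{cases} p_0\,p_s\,p_f^{\,i-1}, & k=0,\ i\ge1,\\ p\,p_s\,p_f^{\,i-k-1}, & 1\le k\le \min\{K,i-1\},\\ 0, & \text{otherwise}.\end{cases}$$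
   Context: Model: $h(t)=1$ means successful decoding at the receiver in slot $t$; $\delta(t)$ is the (random) clock drift, in slots, of the receiver's clock relative to the transmitter's clock in slot $t$; $\Delta(t)$ is the age of information (AoI) at the receiver in slot $t$. *)

theory Defs
  imports "HOL-Probability.Probability"
begin

definition aoi_stat_dist :: "real \<Rightarrow> real \<Rightarrow> real \<Rightarrow> nat \<Rightarrow> nat \<Rightarrow> nat \<Rightarrow> real" where
  "aoi_stat_dist p0 p ps K k i =
     (if k = 0 \<and> i \<ge> 1 then p0 * ps * (1 - ps) ^ (i - 1)
      else if 1 \<le> k \<and> k \<le> min K (i - 1) then p * ps * (1 - ps) ^ (i - k - 1)
      else 0)"

end

theory Submission imports Defs begin

lemma (in prob_space) indep_prod:
  assumes "indep_vars (\<lambda>_. count_space UNIV) X I" "finite J" "J \<subseteq> I"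
  shows "prob {x\<in>space M. \<forall>j\<in>J. X j x \<in> S j} = (\<Prod>j\<in>J. prob {x\<in>space M. X j x \<in> S j})"
proof (cases "J = {}")
  case True then show ?thesis by (simp add: prob_space)
next
  case False
  have ind: "indep_sets (\<lambda>i. {X i -` A \<inter> space M | A. A \<in> sets (count_space UNIV)}) I"
    using assms(1) unfolding indep_vars_def2 by auto
  have "prob (\<Inter>j\<in>J. X j -` S j \<inter> space M) = (\<Prod>j\<in>J. prob (X j -` S j \<inter> space M))"
    by (rule indep_setsD[OF ind assms(3) False assms(2)]) auto
  moreover have "(\<Inter>j\<in>J. X j -` S j \<inter> space M) = {x\<in>space M. \<forall>j\<in>J. X j x \<in> S j}"
    using False by auto
  moreover have "\<And>j. X j -` S j \<inter> space M = {x\<in>space M. X j x \<in> S j}" by auto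
  ultimately show ?thesis by simp
qed

lemma meas2:
  fixes f :: "'a \<Rightarrow> 'b::countable" and g :: "'a \<Rightarrow> 'c::countable"
  assumes "f \<in> M \<rightarrow>\<^sub>M count_space UNIV" "g \<in> M \<rightarrow>\<^sub>M count_space UNIV"
  shows "(\<lambda>x. F (f x) (g x)) \<in> M \<rightarrow>\<^sub>M (count_space UNIV :: 'd measure)"
proof -
  have "(\<lambda>x. (f x, g x)) \<in> M \<rightarrow>\<^sub>M count_space UNIV \<Otimes>\<^sub>M count_space UNIV"
    using assms by measurable
  then have "(\<lambda>x. (f x, g x)) \<in> M \<rightarrow>\<^sub>M count_space (UNIV \<times> UNIV)"
    by (simp add: pair_measure_countable)
  then show ?thesis
    using measurable_compose[of "\<lambda>x. (f x, g x)" M "count_space (UNIV \<times> UNIV)" "\<lambda>(a,b). F a b" "count_space UNIV"]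
    by simp
qed

theorem lemma2:
  fixes M :: "'a measure"
    and ps pf p0 p :: real and K :: nat
    and h \<delta> :: "nat \<Rightarrow> 'a \<Rightarrow> nat"
    and \<Delta> :: "nat \<Rightarrow> 'a \<Rightarrow> int"
  assumes "prob_space M"
    and "0 < ps" "ps < 1" "pf = 1 - ps"
    and "K \<ge> 1"
    and "0 \<le> p0" "p0 \<le> 1" "0 \<le> p" "p \<le> 1" "p0 + real K * p = 1"
    and indep: "prob_space.indep_vars M (\<lambda>_. count_space UNIV)
                  (\<lambda>j. case j of Inl t \<Rightarrow> h t | Inr t \<Rightarrow> \<delta> t) (UNIV :: (nat + nat) set)"
    and h1: "\<And>t. measure M {x \<in> space M. h t x = 1} = ps"
    and h0: "\<And>t. measure M {x \<in> space M. h t x = 0} = pf"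
    and d0: "\<And>t. measure M {x \<in> space M. \<delta> t x = 0} = p0"
    and dk: "\<And>t k. 1 \<le> k \<Longrightarrow> k \<le> K \<Longrightarrow> measure M {x \<in> space M. \<delta> t x = k} = p"
    and init_meas: "\<Delta> 0 \<in> measurable M (count_space UNIV)"
    and init_pos: "\<And>x. x \<in> space M \<Longrightarrow> \<Delta> 0 x \<ge> 1"
    and rec: "\<And>t x. x \<in> space M \<Longrightarrow>
               \<Delta> (Suc t) x = (if h (Suc t) x = 1 then int (\<delta> (Suc t) x) + 1
                  else max 1 (\<Delta> t x + int (\<delta> (Suc t) x) - int (\<delta> t x) + 1))"
  shows "\<forall>k \<le> K. \<forall>i \<ge> 1.
           (\<lambda>t. measure M {x \<in> space M. \<delta> t x = k \<and> \<Delta> t x = int i})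
             \<longlonglongrightarrow> aoi_stat_dist p0 p ps K k i"
proof -
  interpret prob_space M by fact
  define X where "X = (\<lambda>j. case j of Inl t \<Rightarrow> h t | Inr t \<Rightarrow> \<delta> t)"
  have ind: "indep_vars (\<lambda>_. count_space UNIV) X UNIV" using indep X_def by simp
  have rv: "\<And>j. X j \<in> M \<rightarrow>\<^sub>M count_space UNIV"
    using ind unfolding indep_vars_def2 by auto
  have hm[measurable]: "\<And>t. h t \<in> M \<rightarrow>\<^sub>M count_space UNIV"
    using rv[of "Inl _"] by (simp add: X_def)
  have dm[measurable]: "\<And>t. \<delta> t \<in> M \<rightarrow>\<^sub>M count_space UNIV"
    using rv[of "Inr _"] by (simp add: X_def)
  have Dm[measurable]: "\<Delta> t \<in> M \<rightarrow>\<^sub>M count_space UNIV" for t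
  proof (induction t)
    case 0 then show ?case using init_meas by simp
  next
    case (Suc t)
    have f1: "(\<lambda>x. Pair (h (Suc t) x) (\<delta> (Suc t) x)) \<in> M \<rightarrow>\<^sub>M count_space UNIV"
      using meas2[of "h (Suc t)" M "\<delta> (Suc t)" Pair] hm dm by blast
    have f2: "(\<lambda>x. Pair (\<Delta> t x) (\<delta> t x)) \<in> M \<rightarrow>\<^sub>M count_space UNIV"
      using meas2[of "\<Delta> t" M "\<delta> t" Pair] Suc dm by blast
    define G where "G = (\<lambda>(a::nat,b::nat) (c::int,d::nat). if a = 1 then int b + 1 else max 1 (c + int b - int d + 1))"
    have g: "(\<lambda>x. G (h (Suc t) x, \<delta> (Suc t) x) (\<Delta> t x, \<delta> t x)) \<in> M \<rightarrow>\<^sub>M (count_space UNIV :: int measure)"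
      using meas2[OF f1 f2, of G] by simp
    have e: "\<And>x. x \<in> space M \<Longrightarrow> \<Delta> (Suc t) x = G (h (Suc t) x, \<delta> (Suc t) x) (\<Delta> t x, \<delta> t x)"
      using rec unfolding G_def by simp
    show ?case using g measurable_cong[of M "\<Delta> (Suc t)", OF e] by simp
  qed
  have L1: "\<Delta> (m+n) x = int (\<delta> (m+n) x) + int n + 1"
    if x: "x \<in> space M" and m: "1 \<le> m" "h m x = 1" and ns: "\<forall>s. m < s \<and> s \<le> m+n \<longrightarrow> h s x \<noteq> 1"
    for x m n
    using ns
  proof (induction n)
    case 0
    have "Suc (m-1) = m" using m by simp
    then show ?case using rec[OF x, of "m-1"] m by simp
  next
    case (Suc n)
    have IH: "\<Delta> (m+n) x = int (\<delta> (m+n) x) + int n + 1" using Suc by auto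
    have "h (Suc (m+n)) x \<noteq> 1" using Suc.prems by auto
    then show ?case using rec[OF x, of "m+n"] IH by simp
  qed
  have L3: "\<exists>m. 1 \<le> m \<and> m \<le> t \<and> h m x = 1 \<and> (\<forall>s. m < s \<and> s \<le> t \<longrightarrow> h s x \<noteq> 1)
      \<and> \<Delta> t x = int (\<delta> t x) + int (t - m) + 1"
    if x: "x \<in> space M" and ex: "\<exists>s\<in>{1..t}. h s x = 1" for x t
  proof -
    define S where "S = {s\<in>{1..t}. h s x = 1}"
    have fS: "finite S" "S \<noteq> {}" using ex S_def by auto
    define m where "m = Max S"
    have mS: "m \<in> S" using fS m_def by simp
    have mx: "\<forall>s. m < s \<and> s \<le> t \<longrightarrow> h s x \<noteq> 1"
    proof (intro allI impI)
      fix s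
      assume s: "m < s \<and> s \<le> t"
      show "h s x \<noteq> 1"
      proof
        assume "h s x = 1"
        then have "s \<in> S" using s mS S_def by auto
        then have "s \<le> m" using Max_ge[OF fS(1)] m_def by blast
        then show False using s by simp
      qed
    qed
    have "m + (t - m) = t" using mS S_def by auto
    moreover have "\<forall>s. m < s \<and> s \<le> m + (t-m) \<longrightarrow> h s x \<noteq> 1" using mx calculation by simp
    ultimately have "\<Delta> t x = int (\<delta> t x) + int (t - m) + 1"
      using L1[OF x, of m "t-m"] mS S_def by auto
    then show ?thesis using mS S_def mx by auto
  qed
  have hc: "prob {x\<in>space M. h s x \<in> -{1}} = pf" for s
  proof -
    have "{x\<in>space M. h s x \<in> -{1}} = space M - {x\<in>space M. h s x = 1}" by auto
    moreover have "{x\<in>space M. h s x = 1} \<in> sets M" by measurable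
    ultimately show ?thesis using prob_compl h1 assms(4) by simp
  qed
  define N where "N t = {x\<in>space M. \<forall>s\<in>{1..t}. h s x \<noteq> 1}" for t
  have Nm: "N t \<in> sets M" for t unfolding N_def by measurable
  have PN: "prob (N t) = pf ^ t" for t
  proof -
    have "N t = {x\<in>space M. \<forall>j\<in>Inl ` {1..t}. X j x \<in> (\<lambda>_. -{1}) j}"
      unfolding N_def X_def by auto
    then have "prob (N t) = (\<Prod>j\<in>Inl ` {1..t}. prob {x\<in>space M. X j x \<in> (\<lambda>_. -{1::nat}) j})"
      using indep_prod[OF ind, of "Inl ` {1..t}" "\<lambda>_. -{1}"] by simp
    also have "\<dots> = (\<Prod>s\<in>{1..t}. prob {x\<in>space M. h s x \<in> -{1}})"
      by (subst prod.reindex) (auto simp: X_def)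
    also have "\<dots> = pf ^ t" using hc by simp
    finally show ?thesis .
  qed
  have pf01: "0 \<le> pf" "pf < 1" using assms(2-4) by auto
  show ?thesis
  proof (intro allI impI)
    fix k i :: nat assume kK: "k \<le> K" and i1: "1 \<le> i"
    define A where "A t = {x\<in>space M. \<delta> t x = k \<and> \<Delta> t x = int i}" for t
    have Am: "A t \<in> sets M" for t unfolding A_def by measurable
    define c where "c = aoi_stat_dist p0 p ps K k i"
    have pk: "prob {x\<in>space M. \<delta> t x = k} = (if k = 0 then p0 else p)" for t
      using d0 dk[of k t] kK by simp
    have bnd: "c \<le> prob (A t) \<and> prob (A t) \<le> c + pf ^ t" if ti: "t \<ge> i" for t
    proof (cases "k < i")
      case True
      define m0 where "m0 = t + k + 1 - i"
      have m0: "1 \<le> m0" "m0 \<le> t" "t - m0 = i - k - 1" using True ti m0_def by auto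
      define B where "B = {x\<in>space M. \<delta> t x = k \<and> h m0 x = 1 \<and> (\<forall>s\<in>{m0<..t}. h s x \<noteq> 1)}"
      have Bm: "B \<in> sets M" unfolding B_def by measurable
      have BA: "B \<subseteq> A t"
      proof
        fix x assume xB: "x \<in> B"
        have tt: "m0 + (t - m0) = t" using m0 by simp
        have "\<forall>s. m0 < s \<and> s \<le> m0 + (t-m0) \<longrightarrow> h s x \<noteq> 1" using xB tt B_def by auto
        then have "\<Delta> (m0 + (t-m0)) x = int (\<delta> (m0 + (t-m0)) x) + int (t-m0) + 1"
          using L1[of x m0 "t-m0"] xB B_def m0 by auto
        then have "\<Delta> t x = int k + int (i - k - 1) + 1" using tt xB B_def m0 by simp
        then show "x \<in> A t" using xB B_def A_def True by auto
      qed
      have ABN: "A t \<subseteq> B \<union> N t"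
      proof
        fix x assume xA: "x \<in> A t"
        show "x \<in> B \<union> N t"
        proof (cases "x \<in> N t")
          case False
          have xs: "x \<in> space M" using xA A_def by auto
          have "\<exists>s\<in>{1..t}. h s x = 1" using xA False xs N_def by auto
          then obtain m where mm: "1 \<le> m" "m \<le> t" "h m x = 1" "\<forall>s. m < s \<and> s \<le> t \<longrightarrow> h s x \<noteq> 1"
            "\<Delta> t x = int (\<delta> t x) + int (t - m) + 1" using L3[OF xs] by blast
          then have "int i = int k + int (t - m) + 1" using xA A_def by auto
          then have "m = m0" using mm m0_def by linarith
          then show ?thesis using mm xA A_def B_def by auto
        qed simp
      qed
      define J where "J = insert (Inr t) (insert (Inl m0) (Inl ` {m0<..t}))"
      define S where "S = (\<lambda>j::nat+nat. case j of Inr _ \<Rightarrow> {k} | Inl s \<Rightarrow> if s = m0 then {1} else -{1::nat})"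
      have "B = {x\<in>space M. \<forall>j\<in>J. X j x \<in> S j}"
        unfolding B_def J_def S_def X_def by auto
      then have "prob B = (\<Prod>j\<in>J. prob {x\<in>space M. X j x \<in> S j})"
        using indep_prod[OF ind, of J S] J_def by simp
      also have "\<dots> = prob {x\<in>space M. \<delta> t x = k} * ps * (\<Prod>j\<in>Inl ` {m0<..t}. prob {x\<in>space M. X j x \<in> S j})"
      proof -
        have fin: "finite (Inl ` {m0<..t} :: (nat+nat) set)" by simp
        have n1: "Inr t \<notin> insert (Inl m0) (Inl ` {m0<..t})" by auto
        have n2: "Inl m0 \<notin> (Inl ` {m0<..t} :: (nat+nat) set)" by auto
        show ?thesis
          unfolding J_def prod.insert[OF finite_insert[THEN iffD2, OF fin] n1] prod.insert[OF fin n2]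
          by (simp add: S_def X_def h1 h1[unfolded One_nat_def])
      qed
      also have "(\<Prod>j\<in>Inl ` {m0<..t}. prob {x\<in>space M. X j x \<in> S j}) = (\<Prod>s\<in>{m0<..t}. prob {x\<in>space M. h s x \<in> -{1}})"
        by (subst prod.reindex) (auto simp: X_def S_def intro!: prod.cong)
      also have "\<dots> = pf ^ (i - k - 1)" using hc m0 by simp
      finally have PB: "prob B = c"
        using pk True unfolding c_def aoi_stat_dist_def assms(4) by (auto simp: kK)
      have "c \<le> prob (A t)" using finite_measure_mono[OF BA Am] PB by simp
      moreover have "prob (A t) \<le> prob (B \<union> N t)" using finite_measure_mono[OF ABN sets.Un[OF Bm Nm]] .
      moreover have "prob (B \<union> N t) \<le> prob B + prob (N t)" using measure_Un_le[OF Bm Nm] .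
      ultimately show ?thesis using PB PN by simp
    next
      case False
      have c0: "c = 0" using False unfolding c_def aoi_stat_dist_def using i1 by auto
      have "A t \<subseteq> N t"
      proof
        fix x assume xA: "x \<in> A t"
        show "x \<in> N t"
        proof (rule ccontr)
          assume "x \<notin> N t"
          have xs: "x \<in> space M" using xA A_def by auto
          have "\<exists>s\<in>{1..t}. h s x = 1" using \<open>x \<notin> N t\<close> xs N_def by auto
          then obtain m where "\<Delta> t x = int (\<delta> t x) + int (t - m) + 1" using L3[OF xs] by blast
          then show False using xA A_def False by auto
        qed
      qed
      then have "prob (A t) \<le> prob (N t)" using finite_measure_mono[OF _ Nm] by blast
      then show ?thesis using c0 PN by simp
    qed
    have lim: "(\<lambda>t. c + pf ^ t) \<longlonglongrightarrow> c"
      using tendsto_add[OF tendsto_const LIMSEQ_power_zero[of pf]] pf01 by simp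
    have "(\<lambda>t. prob (A t)) \<longlonglongrightarrow> c"
    proof (rule tendsto_sandwich[OF _ _ tendsto_const lim])
      show "\<forall>\<^sub>F t in sequentially. c \<le> prob (A t)"
        unfolding eventually_sequentially using bnd by blast
      show "\<forall>\<^sub>F t in sequentially. prob (A t) \<le> c + pf ^ t"
        unfolding eventually_sequentially using bnd by blast
    qed
    then show "(\<lambda>t. measure M {x \<in> space M. \<delta> t x = k \<and> \<Delta> t x = int i})
             \<longlonglongrightarrow> aoi_stat_dist p0 p ps K k i" unfolding A_def c_def .
  qed
qed

end
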